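(* There is a non-adaptive deterministic group testing algorithm on $n$ items that makes $t=\log n+0.5\log\log n+O(1)$ tests and decides whether $d\le 1$, and if $d=1$ detects the defective item.
   Context: Group testing: items $X=[n]$, unknown defective set $I\subseteq X$ with $d=|I|$. A test $Q\subseteq X$ has answer $1$ if $Q\cap I\neq\emptyset$ and $0$ otherwise. A non-adaptive algorithm fixes all its tests in advance, then computes its output from the answers. Logarithms are base 2. *)

theory Defs
  imports Complex_Main
begin

definition answers :: "nat set list \<Rightarrow> nat set \<Rightarrow> bool list" where
  "answers tests I = map (\<lambda>Q. Q \<inter> I \<noteq> {}) tests"

text \<open>A non-adaptive algorithm on items {1..n}: a list of tests (subsets of {1..n}) and
  a decoder from the answer vector to (claim "d <= 1", claimed defective item).\<close>
definition decides_le1_and_finds :: "nat \<Rightarrow> nat set list \<Rightarrow> (bool list \<Rightarrow> bool \<times> nat) \<Rightarrow> bool" where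
  "decides_le1_and_finds n tests dec \<longleftrightarrow>
     (\<forall>Q \<in> set tests. Q \<subseteq> {1..n}) \<and>
     (\<forall>I. I \<subseteq> {1..n} \<longrightarrow>
        (fst (dec (answers tests I)) \<longleftrightarrow> card I \<le> 1) \<and>
        (\<forall>x. I = {x} \<longrightarrow> snd (dec (answers tests I)) = x))"

end

theory Submission imports Defs begin
lemma cb_step: "(m+1) * ((2*(m+1)) choose (m+1)) = 2*(2*m+1) * ((2*m) choose m)"
proof -
  define A where "A = (2*m) choose m"
  define B where "B = (2*m+1) choose (m+1)"
  define C where "C = (2*(m+1)) choose (m+1)"
  have c: "(2*m+1) choose m = B"
    using binomial_symmetric[of m "2*m+1"] B_def by simp
  have a0: "Suc m * (Suc (2*m+1) choose Suc m) = Suc (2*m+1) * ((2*m+1) choose m)"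
    by (rule Suc_times_binomial)
  have "Suc (2*m+1) = 2*(m+1)" "Suc m = m+1" by simp_all
  hence a: "(m+1) * C = (2*(m+1)) * B" using a0 c unfolding C_def by metis
  have b0: "Suc (2*m) * ((2*m) choose m) = (Suc (2*m) choose Suc m) * Suc m"
    by (rule Suc_times_binomial_eq)
  hence b: "(2*m+1) * A = B * (m+1)" unfolding A_def B_def by simp
  from a have "(m+1)*C = (m+1)*(2*B)" by (simp add: algebra_simps)
  hence "C = 2*B" by (metis mult_left_cancel Suc_eq_plus1 nat.distinct(1))
  hence "(m+1)*C = 2*(B*(m+1))" by simp
  also have "\<dots> = 2*(2*m+1)*A" using b by simp
  finally show ?thesis unfolding C_def A_def .
qed

lemma cb_bound: "m \<ge> 1 \<Longrightarrow> 16^m \<le> 4*m*((2*m) choose m)^2"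
proof (induction m rule: nat_induct_at_least)
  case base
  then show ?case by (simp add: numeral_eq_Suc)
next
  case (Suc m)
  define X where "X = ((2*m) choose m)^2"
  define Y where "Y = ((2*(m+1)) choose (m+1))^2"
  have e: "(m+1)^2 * Y = 4*(2*m+1)^2 * X"
  proof -
    have "((m+1) * ((2*(m+1)) choose (m+1)))^2 = (2*(2*m+1) * ((2*m) choose m))^2" using cb_step[of m] by argo
    thus ?thesis unfolding X_def Y_def by (simp only: power_mult_distrib) simp
  qed
  have ih: "16^m \<le> 4*m*X" using Suc.IH X_def by simp
  have p: "4*m*(m+1)^2 \<le> (m+1)*(2*m+1)^2" by (simp add: power2_eq_square algebra_simps)
  have "16^(m+1) * (m*(m+1)^2) = 4 * 16^m * (4*m*(m+1)^2)" by (simp add: algebra_simps)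
  also have "\<dots> \<le> 4 * (4*m*X) * ((m+1)*(2*m+1)^2)"
    using mult_mono[OF _ p, of "4*16^m" "4*(4*m*X)"] ih by linarith
  also have "\<dots> = 4*(m+1)*(m*((m+1)^2*Y))"
    using e by (simp add: algebra_simps)
  also have "\<dots> = 4*(m+1)*Y * (m*(m+1)^2)" by (simp add: algebra_simps)
  finally have "16^(m+1) * (m*(m+1)^2) \<le> 4*(m+1)*Y * (m*(m+1)^2)" .
  moreover have "m*(m+1)^2 > 0" using Suc by simp
  ultimately have "16^(m+1) \<le> 4*(m+1)*Y" by (meson mult_le_cancel2 not_less)
  thus ?case unfolding Y_def by simp
qed
lemma card_union_gt:
  assumes "finite A" "finite B" "card A = m" "card B = m" "A \<noteq> B"
  shows "card (A \<union> B) > m"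
proof (rule ccontr)
  assume "\<not> card (A \<union> B) > m"
  hence le: "card (A \<union> B) \<le> m" by simp
  have fin: "finite (A \<union> B)" using assms by simp
  have "card A \<le> card (A \<union> B)" "card B \<le> card (A \<union> B)" using fin by (auto intro: card_mono)
  hence "card A = card (A \<union> B)" "card B = card (A \<union> B)" using le assms by auto
  hence "A = A \<union> B" "B = A \<union> B" using card_subset_eq[OF fin] by auto
  thus False using assms(5) by simp
qed

lemma l1: assumes "I \<subseteq> {1..n}" shows "({x\<in>{1..n}. j \<in> f x} \<inter> I \<noteq> {}) = (\<exists>x\<in>I. j \<in> (f x::nat set))"
proof
  assume "{x\<in>{1..n}. j \<in> f x} \<inter> I \<noteq> {}"
  then obtain x where "x \<in> {x\<in>{1..n}. j \<in> f x} \<inter> I" by blast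
  thus "\<exists>x\<in>I. j \<in> f x" by blast
next
  assume "\<exists>x\<in>I. j \<in> f x"
  then obtain x where x: "x \<in> I" "j \<in> f x" by blast
  hence "x \<in> {1..n}" using assms by blast
  hence "x \<in> {x\<in>{1..n}. j \<in> f x} \<inter> I" using x by blast
  thus "{x\<in>{1..n}. j \<in> f x} \<inter> I \<noteq> {}" by blast
qed
lemma l2: assumes "\<forall>x\<in>I. f x \<subseteq> {0..<2*m}" shows "{j. j < 2*m \<and> (\<exists>x\<in>I. j \<in> f x)} = \<Union>((f::nat\<Rightarrow>nat set) ` I)"
proof (intro set_eqI iffI)
  fix j assume "j \<in> \<Union>(f ` I)"
  then obtain x where x: "x \<in> I" "j \<in> f x" by blast
  hence "j \<in> {0..<2*m}" using assms by blast
  thus "j \<in> {j. j < 2*m \<and> (\<exists>x\<in>I. j \<in> f x)}" using x by auto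
qed auto

lemma lin_aux: fixes m l b :: real
  assumes "m \<le> (l + 0.5 * b) / 2 + 2" "b \<le> 2*l" "1 \<le> l" shows "m \<le> 4*l"
proof -
  have "0.5 * b = b / 2" by simp
  thus ?thesis using assms by argo
qed

lemma cancel_aux: "(a::nat) * 4 * m \<le> 4 * m * b \<Longrightarrow> m \<ge> 1 \<Longrightarrow> a \<le> b"
  by simp

lemma scheme:
  assumes "n \<le> (2*m) choose m"
  shows "\<exists>tests dec. decides_le1_and_finds n tests dec \<and> length tests = 2*m"
proof -
  define S where "S = {B. B \<subseteq> {0..<2*m} \<and> card B = m}"
  have "card S = (2*m) choose m" unfolding S_def using n_subsets[of "{0..<2*m}" m] by simp
  hence "card {1..n} \<le> card S" using assms by simp
  moreover have "finite S" unfolding S_def by simp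
  ultimately obtain f where fS: "f ` {1..n} \<subseteq> S" and inj: "inj_on f {1..n}"
    using card_le_inj[of "{1..n}" S] by auto
  define tests where "tests = map (\<lambda>j. {x\<in>{1..n}. j \<in> f x}) [0..<2*m]"
  define U where "U = (\<lambda>ans::bool list. {j. j < length ans \<and> ans!j})"
  define dec where "dec = (\<lambda>ans. (card (U ans) \<le> m, inv_into {1..n} f (U ans)))"
  have fx: "f x \<subseteq> {0..<2*m}" "card (f x) = m" "finite (f x)" if "x \<in> {1..n}" for x
  proof -
    have "f x \<in> S" using fS that by blast
    thus "f x \<subseteq> {0..<2*m}" "card (f x) = m" "finite (f x)" unfolding S_def by (auto intro: finite_subset)
  qed
  have keyU: "U (answers tests I) = \<Union>(f ` I)" if "I \<subseteq> {1..n}" for I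
  proof -
    have len: "length (answers tests I) = 2*m" by (simp add: answers_def tests_def)
    have nth: "answers tests I ! j = (\<exists>x\<in>I. j \<in> f x)" if "j < 2*m" for j
      unfolding answers_def tests_def using l1[OF \<open>I \<subseteq> {1..n}\<close>, of j f] that by simp
    have "U (answers tests I) = {j. j < 2*m \<and> (\<exists>x\<in>I. j \<in> f x)}"
      unfolding U_def len using nth by blast
    also have "\<dots> = \<Union>(f ` I)"
    proof (rule l2)
      show "\<forall>x\<in>I. f x \<subseteq> {0..<2*m}" using fx(1) that by blast
    qed
    finally show ?thesis .
  qed
  have "decides_le1_and_finds n tests dec"
    unfolding decides_le1_and_finds_def
  proof (intro conjI allI impI ballI)
    fix Q assume "Q \<in> set tests" thus "Q \<subseteq> {1..n}" unfolding tests_def by auto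
  next
    fix I x assume I: "I \<subseteq> {1..n}" and "I = {x}"
    thus "snd (dec (answers tests I)) = x" unfolding dec_def using keyU[OF I] inv_into_f_f[OF inj] by auto
  next
    fix I assume I: "I \<subseteq> {1..n}"
    have finI: "finite I" using I finite_subset by blast
    have finU: "finite (\<Union>(f ` I))" using fx I finI by auto
    show "fst (dec (answers tests I)) = (card I \<le> 1)"
    proof (cases "card I \<le> 1")
      case True
      then consider "I = {}" | x where "I = {x}" using finI
        by (metis card_0_eq card_1_singletonE le_Suc_eq One_nat_def le_zero_eq)
      then show ?thesis
      proof cases
        case 1 then show ?thesis unfolding dec_def using keyU[OF I] by simp
      next
        case 2 then show ?thesis unfolding dec_def using keyU[OF I] fx I by simp
      qed
    next
      case False
      then obtain x y where xy: "x \<in> I" "y \<in> I" "x \<noteq> y"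
        using finI by (metis One_nat_def card_le_Suc0_iff_eq)
      have "f x \<noteq> f y" using inj xy I by (meson inj_on_def subsetD)
      have xn: "x \<in> {1..n}" "y \<in> {1..n}" using xy I by blast+
      hence "card (f x \<union> f y) > m" using card_union_gt[OF fx(3)[OF xn(1)] fx(3)[OF xn(2)] fx(2)[OF xn(1)] fx(2)[OF xn(2)] \<open>f x \<noteq> f y\<close>] by simp
      moreover have "card (f x \<union> f y) \<le> card (\<Union>(f ` I))"
        using finU xy by (intro card_mono) auto
      ultimately show ?thesis using False unfolding dec_def using keyU[OF I] by simp
    qed
  qed
  moreover have "length tests = 2*m" unfolding tests_def by simp
  ultimately show ?thesis by blast
qed
theorem lemma9:
  shows "\<exists>C::real. \<forall>n::nat. n \<ge> 2 \<longrightarrow>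
           (\<exists>tests dec. decides_le1_and_finds n tests dec \<and>
              \<bar>real (length tests) - (log 2 n + 0.5 * log 2 (log 2 n))\<bar> \<le> C)"
proof (intro exI[of _ 4] allI impI)
  fix n :: nat assume n: "n \<ge> 2"
  define l where "l = log 2 (real n)"
  define L where "L = l + 0.5 * log 2 l"
  have l1: "l \<ge> 1" unfolding l_def using n by (subst le_log_iff) auto
  have lg0: "log 2 l \<ge> 0" using l1 by simp
  have ln2: "ln 2 \<ge> (1/2::real)"
  proof -
    have "ln (1/2::real) \<le> 1/2 - 1" by (rule ln_le_minus_one) simp
    moreover have "ln (1/2::real) = - ln 2" by (simp add: ln_div)
    ultimately show ?thesis by simp
  qed
  have lgl: "log 2 l \<le> 2*l"
  proof -
    have "ln l \<le> l - 1" using l1 by (intro ln_le_minus_one) simp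
    also have "\<dots> \<le> 2*l*ln 2" 
    proof -
      have "l * 1 \<le> l * (2 * ln 2)" using ln2 l1 by (intro mult_left_mono) auto
      thus ?thesis by simp
    qed
    finally have "ln l / ln 2 \<le> 2*l" by (simp add: pos_divide_le_eq)
    thus ?thesis by (simp add: log_def)
  qed
  define m where "m = nat \<lceil>L/2\<rceil> + 1"
  have L1: "L \<ge> 1" unfolding L_def using l1 lg0 by linarith
  have rm: "real m = real_of_int \<lceil>L/2\<rceil> + 1" unfolding m_def using L1 by simp
  have mlo: "real m \<ge> L/2 + 1" using rm ceiling_correct[of "L/2"] by linarith
  have mhi: "real m \<le> L/2 + 2" using rm ceiling_correct[of "L/2"] by linarith
  have m1: "m \<ge> 1" unfolding m_def by simp
  have h5: "0.5 * log 2 l \<le> l" using lgl by simp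
  have m4: "real m \<le> 4*l" using lin_aux[of "real m" l "log 2 l"] mhi lgl l1 unfolding L_def by blast
  have lm: "log 2 (real m) \<le> log 2 (4*l)" using m4 m1 by simp
  have l4: "log 2 (4::real) = 2"
  proof -
    have "log 2 (4::real) = log 2 (2^2)" by simp
    also have "\<dots> = 2" by (subst log_pow_cancel) auto
    finally show ?thesis .
  qed
  have l4l: "log 2 (4*l) = 2 + log 2 l" using l1 l4 by (simp add: log_mult)
  have eq: "log 2 (real (n^2*4*m)) = 2*l + 2 + log 2 (real m)"
  proof -
    have "real (n^2*4*m) = real n ^ 2 * 4 * real m" by simp
    hence "log 2 (real (n^2*4*m)) = log 2 (real n ^ 2) + log 2 4 + log 2 (real m)"
      using n m1 by (simp add: log_mult)
    also have "log 2 (real n ^ 2) = 2 * l" unfolding l_def by (simp add: log_nat_power)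
    finally show ?thesis using l4 by simp
  qed
  have le: "log 2 (real (n^2*4*m)) \<le> real (4*m)"
  proof -
    have "0.5 * log 2 l = log 2 l / 2" by simp
    thus ?thesis using eq lm l4l mlo unfolding L_def by simp argo
  qed
  have pos: "real (n^2*4*m) > 0" using n m1 by simp
  have "real (n^2*4*m) = 2 powr (log 2 (real (n^2*4*m)))" using pos by simp
  also have "\<dots> \<le> 2 powr (real (4*m))" using le by (intro powr_mono) auto
  also have "\<dots> = 2^(4*m)" by (rule powr_realpow) simp
  also have "\<dots> = real (16^m)" by (simp add: power_mult)
  finally have "n^2*4*m \<le> 16^m" by (simp only: of_nat_le_iff)
  also have "\<dots> \<le> 4*m*((2*m) choose m)^2" using cb_bound m1 by simp
  finally have "n^2 \<le> ((2*m) choose m)^2" using cancel_aux m1 by blast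
  hence "n \<le> (2*m) choose m" by (rule power2_le_imp_le) simp
  then obtain tests dec where td: "decides_le1_and_finds n tests dec" "length tests = 2*m"
    using scheme by blast
  have "\<bar>real (length tests) - L\<bar> \<le> 4" using td(2) mlo mhi by simp
  hence "\<bar>real (length tests) - (log 2 n + 0.5 * log 2 (log 2 n))\<bar> \<le> 4"
    unfolding L_def l_def by simp
  thus "\<exists>tests dec. decides_le1_and_finds n tests dec \<and>
              \<bar>real (length tests) - (log 2 n + 0.5 * log 2 (log 2 n))\<bar> \<le> 4"
    using td by blast
qed
end
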